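(* Fix $\vartheta_1\in(0,\pi/2)$, $\varphi_1\in(0,\pi]$ and an integer $k\ge1$. Suppose $\eta_-<\eta_+$ are two points of $I_k$ with $\Phi(\eta_-)=\Phi(\eta_+)=\varphi_1$. Then $$\sin^2\vartheta_1\frac{\eta_-^2}{\sin^2\eta_-}<\sin^2\vartheta_1\frac{\eta_+^2}{\sin^2\eta_+}.$$
   Context: For integers $k\ge0$ let $I_k=[\vartheta_1+k\pi,(k+1)\pi-\vartheta_1]$. For $\eta\in I_k$ set $\gamma(\eta)=\sqrt{1-\sin^2\vartheta_1/\sin^2\eta}$ and $$\Phi(\eta)=-\eta\,\gamma(\eta)+k\pi+\arccos\Big(\frac{\cos(\eta-k\pi)}{\cos\vartheta_1}\Big),\qquad\arccos\in[0,\pi].$$ *)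

theory Defs
  imports "HOL-Analysis.Analysis"
begin

definition Ik :: "real \<Rightarrow> nat \<Rightarrow> real set" where
  "Ik \<theta>1 k = {\<theta>1 + real k * pi .. real (k + 1) * pi - \<theta>1}"

definition gam :: "real \<Rightarrow> real \<Rightarrow> real" where
  "gam \<theta>1 \<eta> = sqrt (1 - (sin \<theta>1)^2 / (sin \<eta>)^2)"

definition Phi :: "real \<Rightarrow> nat \<Rightarrow> real \<Rightarrow> real" where
  "Phi \<theta>1 k \<eta> = - \<eta> * gam \<theta>1 \<eta> + real k * pi
      + arccos (cos (\<eta> - real k * pi) / cos \<theta>1)"

end

theory Submission imports Defs begin

lemma basic:
  fixes \<theta>1 \<eta> :: real and k :: nat
  assumes "0 < \<theta>1" "\<theta>1 < pi / 2" "\<eta> \<in> Ik \<theta>1 k"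
  shows "sin (\<eta> - real k * pi) \<ge> sin \<theta>1" "sin (\<eta> - real k * pi) > 0"
    "cos (\<eta> - real k * pi) \<le> cos \<theta>1" "- cos \<theta>1 \<le> cos (\<eta> - real k * pi)"
    "(sin \<eta>)^2 = (sin (\<eta> - real k * pi))^2" "\<eta> > 0"
    "\<theta>1 \<le> \<eta> - real k * pi" "\<eta> - real k * pi \<le> pi - \<theta>1"
proof -
  define x where "x = \<eta> - real k * pi"
  have x1: "\<theta>1 \<le> x" and x2: "x \<le> pi - \<theta>1" using assms(3) unfolding Ik_def x_def
    by (auto simp: algebra_simps)
  then show "\<theta>1 \<le> \<eta> - real k * pi" "\<eta> - real k * pi \<le> pi - \<theta>1" by (auto simp: x_def)
  show "\<eta> > 0" using x1 assms(1) unfolding x_def by (smt (verit) of_nat_0_le_iff pi_gt_zero mult_nonneg_nonneg)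
  have c1: "cos x \<le> cos \<theta>1" using cos_monotone_0_pi_le[of \<theta>1 x] x1 x2 assms by auto
  have c2: "cos (pi - \<theta>1) \<le> cos x" using cos_monotone_0_pi_le[of x "pi - \<theta>1"] x1 x2 assms by auto
  then have c2': "- cos \<theta>1 \<le> cos x" by simp
  show "cos (\<eta> - real k * pi) \<le> cos \<theta>1" "- cos \<theta>1 \<le> cos (\<eta> - real k * pi)"
    using c1 c2' by (auto simp: x_def)
  have sp: "sin x > 0" using sin_gt_zero[of x] x1 x2 assms by auto
  then show "sin (\<eta> - real k * pi) > 0" by (simp add: x_def)
  have "(cos x)^2 \<le> (cos \<theta>1)^2" using c1 c2' cos_gt_zero[of \<theta>1] assms
    by (simp add: abs_le_iff power2_le_iff_abs_le abs_square_le_1 power_mono_iff)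
  then have "(sin \<theta>1)^2 \<le> (sin x)^2" by (simp add: sin_squared_eq)
  moreover have "sin \<theta>1 > 0" using sin_gt_zero[of \<theta>1] assms by auto
  ultimately show "sin (\<eta> - real k * pi) \<ge> sin \<theta>1" using sp
    by (simp add: x_def power2_le_iff_abs_le) 
  show "(sin \<eta>)^2 = (sin (\<eta> - real k * pi))^2"
    by (simp add: sin_diff power_mult_distrib; cases "even k"; simp)
qed

lemma quasi:
  fixes \<theta>1 \<eta>1 \<eta> \<eta>2 :: real and k :: nat
  assumes "0 < \<theta>1" "\<theta>1 < pi / 2" "\<eta>1 \<in> Ik \<theta>1 k" "\<eta>2 \<in> Ik \<theta>1 k"
    "\<eta>1 < \<eta>" "\<eta> < \<eta>2"
  shows "\<eta>^2 / (sin \<eta>)^2 < max (\<eta>1^2 / (sin \<eta>1)^2) (\<eta>2^2 / (sin \<eta>2)^2)"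
proof -
  define K where "K = real k * pi"
  define M where "M = max (\<eta>1^2 / (sin \<eta>1)^2) (\<eta>2^2 / (sin \<eta>2)^2)"
  have \<eta>I: "\<eta> \<in> Ik \<theta>1 k" using assms unfolding Ik_def by auto
  note b1 = basic[OF assms(1,2,3), folded K_def]
  note b2 = basic[OF assms(1,2,4), folded K_def]
  note b = basic[OF assms(1,2) \<eta>I, folded K_def]
  have M1: "\<eta>1^2 / (sin \<eta>1)^2 \<le> M" and M2: "\<eta>2^2 / (sin \<eta>2)^2 \<le> M" by (auto simp: M_def)
  have Mpos: "M > 0" using M1 b1 by (smt (verit) divide_pos_pos zero_less_power)
  define m where "m = sqrt M"
  have mpos: "m > 0" using Mpos by (simp add: m_def)
  define g where "g = (\<lambda>y. m * sin y - (K + y))"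
  have key: "g (\<eta>' - K) \<ge> 0 \<longleftrightarrow> \<eta>'^2 / (sin \<eta>')^2 \<le> M" if "\<eta>' \<in> Ik \<theta>1 k" for \<eta>'
  proof -
    note bb = basic[OF assms(1,2) that, folded K_def]
    have "\<eta>'^2 / (sin \<eta>')^2 \<le> M \<longleftrightarrow> \<eta>'^2 \<le> M * (sin (\<eta>' - K))^2"
      using bb by (simp add: divide_le_eq)
    also have "\<dots> \<longleftrightarrow> \<eta>'^2 \<le> (m * sin (\<eta>' - K))^2"
      using Mpos by (simp add: m_def power_mult_distrib)
    also have "\<dots> \<longleftrightarrow> \<eta>' \<le> m * sin (\<eta>' - K)"
      using bb mpos by (intro power2_le_iff_abs_le[THEN trans]) auto
    finally show ?thesis by (auto simp: g_def)
  qed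
  have g1: "g (\<eta>1 - K) \<ge> 0" using key[OF assms(3)] M1 by simp
  have g2: "g (\<eta>2 - K) \<ge> 0" using key[OF assms(4)] M2 by simp
  have dg: "DERIV g y :> m * cos y - 1" for y
    unfolding g_def by (auto intro!: derivative_eq_intros)
  have gpos: "g (\<eta> - K) > 0"
  proof (rule ccontr)
    assume "\<not> ?thesis"
    then have g0: "g (\<eta> - K) \<le> 0" by simp
    obtain z1 where z1: "\<eta>1 - K < z1" "z1 < \<eta> - K" "g (\<eta> - K) - g (\<eta>1 - K) = ((\<eta> - K) - (\<eta>1 - K)) * (m * cos z1 - 1)"
      using MVT2[of "\<eta>1 - K" "\<eta> - K" g "\<lambda>y. m * cos y - 1"] dg assms by auto
    obtain z2 where z2: "\<eta> - K < z2" "z2 < \<eta>2 - K" "g (\<eta>2 - K) - g (\<eta> - K) = ((\<eta>2 - K) - (\<eta> - K)) * (m * cos z2 - 1)"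
      using MVT2[of "\<eta> - K" "\<eta>2 - K" g "\<lambda>y. m * cos y - 1"] dg assms by auto
    have "m * cos z1 - 1 \<le> 0" using z1 g0 g1 assms(5)
      by (smt (verit) mult_pos_pos)
    moreover have "m * cos z2 - 1 \<ge> 0" using z2 g0 g2 assms(6)
      by (smt (verit) mult_pos_neg)
    moreover have "cos z2 < cos z1"
      using cos_monotone_0_pi[of z1 z2] z1 z2 b1(7) b2(8) assms(1) by auto
    ultimately show False using mpos by (smt (verit) mult_strict_left_mono)
  qed
  have "\<not> (g (\<eta> - K) \<le> 0)" using gpos by simp
  have "\<eta>^2 \<le> (m * sin (\<eta> - K))^2 \<and> \<eta>^2 \<noteq> (m * sin (\<eta> - K))^2"
  proof -
    have "\<eta> < m * sin (\<eta> - K)" using gpos by (simp add: g_def K_def)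
    then have "\<eta>^2 < (m * sin (\<eta> - K))^2" using b by (intro power_strict_mono) auto
    then show ?thesis by simp
  qed
  then have "\<eta>^2 < M * (sin \<eta>)^2" using Mpos b by (simp add: m_def power_mult_distrib K_def)
  then show ?thesis using b by (simp add: M_def[symmetric] divide_less_eq)
qed

lemma PhiEq:
  fixes \<theta>1 \<eta> :: real and k :: nat
  assumes "0 < \<theta>1" "\<theta>1 < pi / 2" "\<eta> \<in> Ik \<theta>1 k"
  shows "Phi \<theta>1 k \<eta> = real k * pi + arccos (cos (\<eta> - real k * pi) / cos \<theta>1)
           - sqrt (\<eta>^2 - (sin \<theta>1)^2 * (\<eta>^2 / (sin \<eta>)^2))"
proof -
  note b = basic[OF assms]
  have sn: "sin \<eta> \<noteq> 0" using b by (metis less_irrefl power_zero_numeral zero_less_power2)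
  have "\<eta> * gam \<theta>1 \<eta> = sqrt (\<eta>^2) * sqrt (1 - (sin \<theta>1)^2 / (sin \<eta>)^2)"
    using b by (simp add: gam_def)
  also have "\<dots> = sqrt (\<eta>^2 * (1 - (sin \<theta>1)^2 / (sin \<eta>)^2))" by (simp add: real_sqrt_mult)
  also have "\<eta>^2 * (1 - (sin \<theta>1)^2 / (sin \<eta>)^2) = \<eta>^2 - (sin \<theta>1)^2 * (\<eta>^2 / (sin \<eta>)^2)"
    using sn by (simp add: field_simps)
  finally show ?thesis by (simp add: Phi_def)
qed

lemma lemC:
  fixes \<theta>1 \<eta>1 \<eta>2 :: real and k :: nat
  assumes "0 < \<theta>1" "\<theta>1 < pi / 2" "\<eta>1 \<in> Ik \<theta>1 k" "\<eta>2 \<in> Ik \<theta>1 k" "\<eta>1 < \<eta>2"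
    and inner: "\<And>\<eta>. \<eta>1 < \<eta> \<Longrightarrow> \<eta> < \<eta>2 \<Longrightarrow> \<eta>^2 / (sin \<eta>)^2 < \<eta>1^2 / (sin \<eta>1)^2"
    and endp: "\<eta>2^2 / (sin \<eta>2)^2 \<le> \<eta>1^2 / (sin \<eta>1)^2"
  shows "Phi \<theta>1 k \<eta>2 < Phi \<theta>1 k \<eta>1"
proof -
  define K where "K = real k * pi"
  define s where "s = sin \<theta>1"
  define c where "c = cos \<theta>1"
  define T where "T = \<eta>1^2 / (sin \<eta>1)^2"
  have spos: "s > 0" using sin_gt_zero[of \<theta>1] assms by (auto simp: s_def)
  have cpos: "c > 0" using cos_gt_zero[of \<theta>1] assms by (auto simp: c_def)
  have sc: "s^2 = 1 - c^2" by (simp add: s_def c_def sin_squared_eq)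
  note b1 = basic[OF assms(1,2,3), folded K_def s_def c_def]
  note b2 = basic[OF assms(1,2,4), folded K_def s_def c_def]
  have sin1: "s^2 \<le> (sin \<eta>1)^2" using b1 spos by (simp add: power_mono)
  have sT: "s^2 * T \<le> \<eta>1^2"
  proof -
    have "s^2 * T = \<eta>1^2 * (s^2 / (sin \<eta>1)^2)" by (simp add: T_def)
    also have "\<dots> \<le> \<eta>1^2 * 1" using sin1 spos
      by (intro mult_left_mono) (auto simp: divide_le_eq)
    finally show ?thesis by simp
  qed
  define N where "N = (\<lambda>y. arccos (cos (y - K) / c) - sqrt (y^2 - s^2 * T))"
  have P1: "Phi \<theta>1 k \<eta>1 = K + N \<eta>1"
    using PhiEq[OF assms(1,2,3)] by (simp add: N_def K_def s_def c_def T_def)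
  have "s^2 * (\<eta>2^2 / (sin \<eta>2)^2) \<le> s^2 * T" using endp by (intro mult_left_mono) (auto simp: T_def)
  then have "sqrt (\<eta>2^2 - s^2 * T) \<le> sqrt (\<eta>2^2 - s^2 * (\<eta>2^2 / (sin \<eta>2)^2))"
    by (intro real_sqrt_le_mono) simp
  then have P2: "Phi \<theta>1 k \<eta>2 \<le> K + N \<eta>2"
    using PhiEq[OF assms(1,2,4)]
    by (simp add: N_def K_def s_def c_def)
  have "N \<eta>2 < N \<eta>1"
  proof (rule DERIV_neg_imp_decreasing_open[OF assms(5)])
    have "\<forall>y\<in>{\<eta>1..\<eta>2}. -1 \<le> cos (y - K) / c \<and> cos (y - K) / c \<le> 1"
    proof
      fix y assume y: "y \<in> {\<eta>1..\<eta>2}"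
      then have "y \<in> Ik \<theta>1 k" using assms(3,4) by (auto simp: Ik_def)
      note b = basic[OF assms(1,2) this, folded K_def s_def c_def]
      show "-1 \<le> cos (y - K) / c \<and> cos (y - K) / c \<le> 1" using b cpos
        by (auto simp: divide_le_eq le_divide_eq)
    qed
    moreover have "continuous_on {\<eta>1..\<eta>2} (\<lambda>y. cos (y - K))"
      by (intro continuous_intros)
    then have "continuous_on {\<eta>1..\<eta>2} (\<lambda>y. cos (y - K) / c)"
      by (rule continuous_on_divide[OF _ continuous_on_const]) (use cpos in simp)
    ultimately have ca: "continuous_on {\<eta>1..\<eta>2} (\<lambda>y. arccos (cos (y - K) / c))"
      by (intro continuous_on_arccos) auto
    have cs: "continuous_on {\<eta>1..\<eta>2} (\<lambda>y. sqrt (y^2 - s^2 * T))"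
      by (intro continuous_intros)
    show "continuous_on {\<eta>1..\<eta>2} N" unfolding N_def
      by (rule continuous_on_diff[OF ca cs])
  next
    fix y assume y: "\<eta>1 < y" "y < \<eta>2"
    then have yI: "y \<in> Ik \<theta>1 k" using assms(3,4) by (auto simp: Ik_def)
    note b = basic[OF assms(1,2) yI, folded K_def s_def c_def]
    define x where "x = y - K"
    have x1: "\<theta>1 < x" using y b1 by (simp add: x_def)
    have x2: "x < pi - \<theta>1" using y b2 by (simp add: x_def)
    have cx1: "cos x < c" using cos_monotone_0_pi[of \<theta>1 x] x1 x2 assms by (auto simp: c_def)
    have cx2: "- c < cos x" using cos_monotone_0_pi[of x "pi - \<theta>1"] x1 x2 assms by (auto simp: c_def)
    have r1: "-1 < cos x / c" "cos x / c < 1" using cx1 cx2 cpos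
      by (auto simp: divide_less_eq less_divide_eq)
    have Epos: "y^2 - s^2 * T > 0"
    proof -
      have "\<eta>1^2 < y^2" using y b1 by (intro power_strict_mono) auto
      then show ?thesis using sT by simp
    qed
    define D0 where "D0 = sqrt (1 - (cos x / c)^2)"
    define E where "E = sqrt (y^2 - s^2 * T)"
    have D0pos: "D0 > 0" unfolding D0_def using r1 by (simp add: abs_square_less_1)
    have Epos': "E > 0" using Epos by (simp add: E_def)
    have d1: "DERIV (\<lambda>y. cos (y - K) / c) y :> - sin (y - K) / c"
      using cpos by (auto intro!: derivative_eq_intros)
    have d2: "DERIV (\<lambda>y. arccos (cos (y - K) / c)) y :> inverse (- D0) * (- sin x / c)"
      using DERIV_chain2[OF DERIV_arccos[of "cos (y - K) / c"] d1] r1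
      by (simp add: x_def D0_def)
    have d0: "DERIV (\<lambda>y. y^2 - s^2 * T) y :> 2 * y"
      by (auto intro!: derivative_eq_intros)
    have d3: "DERIV (\<lambda>y. sqrt (y^2 - s^2 * T)) y :> inverse E / 2 * (2 * y)"
      using DERIV_chain2[OF DERIV_real_sqrt[OF Epos] d0] by (simp add: E_def)
    have der0: "DERIV N y :> inverse (- D0) * (- sin x / c) - inverse E / 2 * (2 * y)"
      unfolding N_def by (rule DERIV_diff[OF d2 d3])
    have "inverse (- D0) * (- sin x / c) - inverse E / 2 * (2 * y) = sin x / (c * D0) - y / E"
      using D0pos Epos' cpos by (simp add: field_simps)
    with der0 have der: "DERIV N y :> sin x / (c * D0) - y / E" by simp
    have sx: "sin x > 0" using b by (simp add: x_def)
    have sy: "(sin y)^2 = (sin x)^2" using b by (simp add: x_def)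
    have hyp: "y^2 < T * (sin x)^2"
      using inner[OF y] sy sx by (simp add: T_def[symmetric] divide_less_eq)
    have D2: "D0^2 = 1 - (cos x / c)^2" using r1
      by (simp add: D0_def abs_square_less_1 less_imp_le)
    have "(c * D0)^2 = c^2 - (cos x)^2" using cpos D2 by (simp add: power_mult_distrib field_simps)
    then have cD: "(c * D0)^2 = (sin x)^2 - s^2" by (simp add: sc sin_squared_eq)
    have E2: "E^2 = y^2 - s^2 * T" using Epos by (simp add: E_def)
    have "(sin x * E)^2 < (y * (c * D0))^2"
    proof -
      have "(sin x * E)^2 = (sin x)^2 * (y^2 - s^2 * T)" by (simp add: power_mult_distrib E2)
      also have "\<dots> < y^2 * ((sin x)^2 - s^2)"
      proof -
        have "s^2 * y^2 < s^2 * (T * (sin x)^2)" using hyp spos by simp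
        then show ?thesis by (simp add: algebra_simps)
      qed
      also have "\<dots> = (y * (c * D0))^2" by (simp add: power_mult_distrib cD[symmetric])
      finally show ?thesis .
    qed
    moreover have "0 \<le> y * (c * D0)" using b(6) D0pos cpos by simp
    ultimately have "sin x * E < y * (c * D0)"
      by (rule power_less_imp_less_base)
    then have "sin x / (c * D0) < y / E"
      using D0pos cpos Epos' by (simp add: divide_less_eq less_divide_eq field_simps)
    then show "\<exists>d. DERIV N y :> d \<and> d < 0" using der by auto
  qed
  then show ?thesis using P1 P2 by simp
qed

theorem lemma5p52:
  fixes \<theta>1 \<phi>1 \<eta>m \<eta>p :: real and k :: nat
  assumes "0 < \<theta>1" "\<theta>1 < pi / 2"
    and "0 < \<phi>1" "\<phi>1 \<le> pi"
    and "k \<ge> 1"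
    and "\<eta>m \<in> Ik \<theta>1 k" "\<eta>p \<in> Ik \<theta>1 k" "\<eta>m < \<eta>p"
    and "Phi \<theta>1 k \<eta>m = \<phi>1" "Phi \<theta>1 k \<eta>p = \<phi>1"
  shows "(sin \<theta>1)^2 * (\<eta>m^2 / (sin \<eta>m)^2) < (sin \<theta>1)^2 * (\<eta>p^2 / (sin \<eta>p)^2)"
proof (rule ccontr)
  assume "\<not> ?thesis"
  moreover have "(sin \<theta>1)^2 > 0" using sin_gt_zero[of \<theta>1] assms by auto
  ultimately have le: "\<eta>p^2 / (sin \<eta>p)^2 \<le> \<eta>m^2 / (sin \<eta>m)^2"
    by (meson mult_strict_left_mono not_le)
  have "Phi \<theta>1 k \<eta>p < Phi \<theta>1 k \<eta>m"
  proof (rule lemC[OF assms(1,2,6,7,8) _ le])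
    fix \<eta> assume "\<eta>m < \<eta>" "\<eta> < \<eta>p"
    from quasi[OF assms(1,2,6,7) this] le
    show "\<eta>^2 / (sin \<eta>)^2 < \<eta>m^2 / (sin \<eta>m)^2" by simp
  qed
  then show False using assms by simp
qed

end
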